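(* Let $m\ge 2$. Let $H_1$ be the graph with vertices $v_1,\dots,v_5$ and edges $v_1v_2,v_2v_3,v_3v_4,v_4v_5,v_5v_1,v_2v_4,v_3v_5$ (it has exactly one vertex of degree $2$, namely $v_1$), and let $H_2$ be the graph with vertices $v_1,\dots,v_6$ and edges $v_1v_2,v_2v_3,v_3v_4,v_4v_5,v_5v_6,v_6v_1,v_2v_5,v_3v_6$ (it has exactly two vertices of degree $2$, namely $v_1,v_4$). Let $G$ be the cubic graph constructed from the path $P_m$ by replacing each leaf with a copy of $H_1$ and each internal vertex with a copy of $H_2$, where each edge $uv$ of $P_m$ is replaced by an edge joining a degree-$2$ vertex of the copy for $u$ to a degree-$2$ vertex of the copy for $v$, each degree-$2$ vertex being used exactly once. Then (a) $G$ is a bridged, Class $2$ cubic graph with triangles, and (b) $c_2(G)-\left\lceil\frac{|V(G)|+2}{4}\right\rceil=\left\lfloor\frac{m}{2}\right\rfloor$.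
   Context: A graph is bridged if it has a bridge (an edge whose removal increases the number of components). A graph of maximum degree $\Delta$ is Class $1$ if its chromatic index is $\Delta$ and Class $2$ if it is $\Delta+1$. For a graph $G=(V,E)$ and $S_0\subseteq V$, the irreversible $2$-threshold conversion process sets, for $t=1,2,\dots$, $S_t=S_{t-1}\cup\{v: v \text{ has at least } 2 \text{ neighbours in } S_{t-1}\}$; $S_0$ is a $2$-conversion set if $S_t=V$ for some $t$, and $c_2(G)$ is the minimum size of a $2$-conversion set. *)

theory Defs
  imports Complex_Main
begin

text \<open>Simple graphs are given by a vertex set V and a set E of 2-element edges (subsets of V).\<close>

definition degree :: "'a set set \<Rightarrow> 'a \<Rightarrow> nat" where
  "degree E v = card {u. {u, v} \<in> E}"

definition max_degree :: "'a set \<Rightarrow> 'a set set \<Rightarrow> nat" where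
  "max_degree V E = Max (degree E ` V)"

definition cubic :: "'a set \<Rightarrow> 'a set set \<Rightarrow> bool" where
  "cubic V E \<longleftrightarrow> (\<forall>v\<in>V. degree E v = 3)"

definition reach :: "'a set set \<Rightarrow> 'a \<Rightarrow> 'a \<Rightarrow> bool" where
  "reach E = (\<lambda>u v. {u, v} \<in> E)\<^sup>*\<^sup>*"

definition num_components :: "'a set \<Rightarrow> 'a set set \<Rightarrow> nat" where
  "num_components V E = card ((\<lambda>u. {v \<in> V. reach E u v}) ` V)"

definition is_bridge :: "'a set \<Rightarrow> 'a set set \<Rightarrow> 'a set \<Rightarrow> bool" where
  "is_bridge V E e \<longleftrightarrow> e \<in> E \<and> num_components V (E - {e}) > num_components V E"

definition bridged :: "'a set \<Rightarrow> 'a set set \<Rightarrow> bool" where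
  "bridged V E \<longleftrightarrow> (\<exists>e. is_bridge V E e)"

definition proper_edge_colouring :: "'a set set \<Rightarrow> nat \<Rightarrow> ('a set \<Rightarrow> nat) \<Rightarrow> bool" where
  "proper_edge_colouring E k c \<longleftrightarrow>
     (\<forall>e\<in>E. c e < k) \<and> (\<forall>e\<in>E. \<forall>f\<in>E. e \<noteq> f \<and> e \<inter> f \<noteq> {} \<longrightarrow> c e \<noteq> c f)"

definition chromatic_index :: "'a set set \<Rightarrow> nat" where
  "chromatic_index E = (LEAST k. \<exists>c. proper_edge_colouring E k c)"

definition class2 :: "'a set \<Rightarrow> 'a set set \<Rightarrow> bool" where
  "class2 V E \<longleftrightarrow> chromatic_index E = max_degree V E + 1"

definition has_triangle :: "'a set set \<Rightarrow> bool" where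
  "has_triangle E \<longleftrightarrow> (\<exists>a b c. a \<noteq> b \<and> b \<noteq> c \<and> a \<noteq> c \<and>
       {a, b} \<in> E \<and> {b, c} \<in> E \<and> {a, c} \<in> E)"

definition conv_step :: "'a set \<Rightarrow> 'a set set \<Rightarrow> 'a set \<Rightarrow> 'a set" where
  "conv_step V E S = S \<union> {v \<in> V. 2 \<le> card {u \<in> S. {u, v} \<in> E}}"

definition is_2conversion_set :: "'a set \<Rightarrow> 'a set set \<Rightarrow> 'a set \<Rightarrow> bool" where
  "is_2conversion_set V E S \<longleftrightarrow> S \<subseteq> V \<and> (\<exists>t. (conv_step V E ^^ t) S = V)"

definition c2 :: "'a set \<Rightarrow> 'a set set \<Rightarrow> nat" where
  "c2 V E = (LEAST k. \<exists>S. is_2conversion_set V E S \<and> card S = k)"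

text \<open>Vertex (i,j) is v_j in the copy for path vertex i. Path edge i(i+1) joins the "right port" of copy i (v1 for i = 1,
  v4 for internal i) to the "left port" v1 of copy i+1.\<close>

definition H1_edges :: "(nat \<times> nat) list" where
  "H1_edges = [(1,2),(2,3),(3,4),(4,5),(5,1),(2,4),(3,5)]"

definition H2_edges :: "(nat \<times> nat) list" where
  "H2_edges = [(1,2),(2,3),(3,4),(4,5),(5,6),(6,1),(2,5),(3,6)]"

definition G_V :: "nat \<Rightarrow> (nat \<times> nat) set" where
  "G_V m = {(i, j). 1 \<le> i \<and> i \<le> m \<and> 1 \<le> j \<and> j \<le> (if i = 1 \<or> i = m then 5 else 6)}"

definition right_port :: "nat \<Rightarrow> nat \<times> nat" where
  "right_port i = (if i = 1 then (1, 1) else (i, 4))"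

definition G_E :: "nat \<Rightarrow> (nat \<times> nat) set set" where
  "G_E m =
     {{(i, a), (i, b)} | i a b. 1 \<le> i \<and> i \<le> m \<and>
         (a, b) \<in> set (if i = 1 \<or> i = m then H1_edges else H2_edges)}
   \<union> {{right_port i, (i + 1, 1)} | i. 1 \<le> i \<and> i < m}"

end

theory Submission
  imports Defs
begin


definition Hs :: "nat \<Rightarrow> nat \<Rightarrow> (nat \<times> nat) list" where
  "Hs m i = (if i = 1 \<or> i = m then H1_edges else H2_edges)"

lemma loc_edge: "1 \<le> i \<Longrightarrow> i \<le> m \<Longrightarrow> (a,b) \<in> set (Hs m i) \<Longrightarrow> {(i,a),(i,b)} \<in> G_E m"
  unfolding G_E_def Hs_def[symmetric] by blast

lemma port_edge: "1 \<le> i \<Longrightarrow> i < m \<Longrightarrow> {right_port i, (i+1,1)} \<in> G_E m"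
  unfolding G_E_def by blast

lemma GE_iff:
  "{u, v} \<in> G_E m \<longleftrightarrow>
    (\<exists>i. 1 \<le> i \<and> i \<le> m \<and> fst u = i \<and> fst v = i \<and>
        ((snd u, snd v) \<in> set (Hs m i) \<or> (snd v, snd u) \<in> set (Hs m i)))
  \<or> (\<exists>i. 1 \<le> i \<and> i < m \<and> ((u = right_port i \<and> v = (i+1,1)) \<or> (v = right_port i \<and> u = (i+1,1))))"
  (is "?L \<longleftrightarrow> ?R")
proof
  assume ?L
  then show ?R unfolding G_E_def Hs_def[symmetric]
    apply (elim UnE)
    apply (clarsimp simp: doubleton_eq_iff)
    apply (elim disjE)
    apply force
    apply force
    apply (clarsimp simp: doubleton_eq_iff)
    apply (elim disjE)
    apply force
    apply force
    done
next
  assume ?R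
  then consider
     (a) i where "1 \<le> i" "i \<le> m" "fst u = i" "fst v = i"
      "(snd u, snd v) \<in> set (Hs m i) \<or> (snd v, snd u) \<in> set (Hs m i)"
   | (b) i where "1 \<le> i" "i < m" "u = right_port i" "v = (i+1,1)"
   | (c) i where "1 \<le> i" "i < m" "v = right_port i" "u = (i+1,1)"
    by blast
  then show ?L
  proof cases
    case (a i) 
    note h = a
    obtain a b where u: "u = (i,a)" and v: "v = (i,b)" using h(3,4) by (cases u; cases v) auto
    show ?L using h(5) loc_edge[OF h(1,2), of a b] loc_edge[OF h(1,2), of b a]
      by (auto simp: u v insert_commute)
  next
    case (b i)
    then show ?L using port_edge[of i m] by simp
  next
    case (c i)
    then show ?L using port_edge[of i m] by (simp add: insert_commute)
  qed
qed

lemma port_iff: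
  "(\<exists>k. 1 \<le> k \<and> k < m \<and> ((u = right_port k \<and> (i,j) = (k+1,1)) \<or> ((i,j) = right_port k \<and> u = (k+1,1))))
   \<longleftrightarrow> (j=1 \<and> 2 \<le> i \<and> i \<le> m \<and> u = right_port (i-1)) \<or> (i=1 \<and> j=1 \<and> 1<m \<and> u=(2,1))
      \<or> (j=4 \<and> 1<i \<and> i<m \<and> u=(i+1,1))"
  unfolding right_port_def
  apply (rule iffI)
   apply (elim exE conjE disjE; simp split: if_splits)
  apply (elim disjE conjE)
    apply (rule_tac x="i-1" in exI, auto)
  done

lemma edge_pt:
  "{u,(i,j)} \<in> G_E m \<longleftrightarrow> (fst u = i \<and> 1 \<le> i \<and> i \<le> m \<and> ((snd u, j) \<in> set (Hs m i) \<or> (j, snd u) \<in> set (Hs m i)))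
    \<or> (j=1 \<and> 2 \<le> i \<and> i \<le> m \<and> u = right_port (i-1)) \<or> (i=1 \<and> j=1 \<and> 1<m \<and> u=(2,1))
    \<or> (j=4 \<and> 1<i \<and> i<m \<and> u=(i+1,1))"
  unfolding GE_iff port_iff[symmetric] by auto

lemma loc1: "((b, j) \<in> set H1_edges \<or> (j, b) \<in> set H1_edges) \<longleftrightarrow>
  (j=1 \<and> b \<in> {2,5}) \<or> (j=2 \<and> b \<in> {1,3,4}) \<or> (j=3 \<and> b \<in> {2,4,5}) \<or> (j=4 \<and> b \<in> {2,3,5}) \<or> (j=5 \<and> b \<in> {1,3,4})"
  unfolding H1_edges_def by auto

lemma loc2: "((b, j) \<in> set H2_edges \<or> (j, b) \<in> set H2_edges) \<longleftrightarrow>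
  (j=1 \<and> b \<in> {2,6}) \<or> (j=2 \<and> b \<in> {1,3,5}) \<or> (j=3 \<and> b \<in> {2,4,6}) \<or> (j=4 \<and> b \<in> {3,5})
   \<or> (j=5 \<and> b \<in> {2,4,6}) \<or> (j=6 \<and> b \<in> {1,3,5})"
  unfolding H2_edges_def by auto

lemma n11: assumes "2 \<le> m" shows "{u,(1,1)} \<in> G_E m \<longleftrightarrow> u \<in> {(1,2),(1,5),(2,1)}"
  using assms by (cases u) (auto simp: edge_pt Hs_def loc1)

lemma nm1: assumes "2 \<le> m" shows "{u,(m,1)} \<in> G_E m \<longleftrightarrow> u \<in> {(m,2),(m,5),right_port (m-1)}"
  using assms by (cases u) (auto simp: edge_pt Hs_def loc1)

lemma nH1_2: assumes "2 \<le> m" "i = 1 \<or> i = m" shows "{u,(i,2)} \<in> G_E m \<longleftrightarrow> u \<in> {(i,1),(i,3),(i,4)}"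
  using assms by (cases u) (auto simp: edge_pt Hs_def loc1)

lemma nH1_3: assumes "2 \<le> m" "i = 1 \<or> i = m" shows "{u,(i,3)} \<in> G_E m \<longleftrightarrow> u \<in> {(i,2),(i,4),(i,5)}"
  using assms by (cases u) (auto simp: edge_pt Hs_def loc1)

lemma nH1_4: assumes "2 \<le> m" "i = 1 \<or> i = m" shows "{u,(i,4)} \<in> G_E m \<longleftrightarrow> u \<in> {(i,2),(i,3),(i,5)}"
  using assms by (cases u) (auto simp: edge_pt Hs_def loc1)

lemma nH1_5: assumes "2 \<le> m" "i = 1 \<or> i = m" shows "{u,(i,5)} \<in> G_E m \<longleftrightarrow> u \<in> {(i,1),(i,3),(i,4)}"
  using assms by (cases u) (auto simp: edge_pt Hs_def loc1)

lemma nH2_1: assumes "1 < i" "i < m" shows "{u,(i,1)} \<in> G_E m \<longleftrightarrow> u \<in> {(i,2),(i,6),right_port(i-1)}"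
  using assms by (cases u) (auto simp: edge_pt Hs_def loc2)

lemma nH2_2: assumes "1 < i" "i < m" shows "{u,(i,2)} \<in> G_E m \<longleftrightarrow> u \<in> {(i,1),(i,3),(i,5)}"
  using assms by (cases u) (auto simp: edge_pt Hs_def loc2)

lemma nH2_3: assumes "1 < i" "i < m" shows "{u,(i,3)} \<in> G_E m \<longleftrightarrow> u \<in> {(i,2),(i,4),(i,6)}"
  using assms by (cases u) (auto simp: edge_pt Hs_def loc2)

lemma nH2_4: assumes "1 < i" "i < m" shows "{u,(i,4)} \<in> G_E m \<longleftrightarrow> u \<in> {(i,3),(i,5),(i+1,1)}"
  using assms by (cases u) (auto simp: edge_pt Hs_def loc2)

lemma nH2_5: assumes "1 < i" "i < m" shows "{u,(i,5)} \<in> G_E m \<longleftrightarrow> u \<in> {(i,2),(i,4),(i,6)}"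
  using assms by (cases u) (auto simp: edge_pt Hs_def loc2)

lemma nH2_6: assumes "1 < i" "i < m" shows "{u,(i,6)} \<in> G_E m \<longleftrightarrow> u \<in> {(i,1),(i,3),(i,5)}"
  using assms by (cases u) (auto simp: edge_pt Hs_def loc2)


lemma edge_V: assumes "{u,v} \<in> G_E m" shows "v \<in> G_V m"
proof (cases v)
  case (Pair i j)
  show ?thesis using assms unfolding Pair edge_pt G_V_def Hs_def right_port_def
    by (auto simp: loc1 loc2 split: if_splits)
qed

lemma GE_doubleton: "e \<in> G_E m \<Longrightarrow> \<exists>u v. e = {u,v}"
  unfolding G_E_def by blast

lemma GE_sub: "e \<in> G_E m \<Longrightarrow> e \<subseteq> G_V m"
  by (metis GE_doubleton edge_V insert_commute insert_subset empty_subsetI)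

lemma finite_GV: "finite (G_V m)"
proof -
  have "G_V m \<subseteq> {1..m} \<times> {1..6}" unfolding G_V_def by (auto split: if_splits)
  then show ?thesis by (rule finite_subset) auto
qed

lemma card_GV: assumes "2 \<le> m" shows "card (G_V m) = 6*m - 2"
proof -
  have "G_V m = {1..m} \<times> {1..6} - {(1,6),(m,6)}" unfolding G_V_def by (auto split: if_splits)
  moreover have "card ({1..m} \<times> {1..6::nat} - {(1,6),(m,6)}) = 6*m - 2"
    using assms by (subst card_Diff_subset) (auto simp: card_cartesian_product)
  ultimately show ?thesis by simp
qed

lemma N11: assumes "2 \<le> m" shows "{u. {u,(1,1)} \<in> G_E m} = {(1,2),(1,5),(2,1)}"
  using n11[OF assms] by auto

lemma Nm1: assumes "2 \<le> m" shows "{u. {u,(m,1)} \<in> G_E m} = {(m,2),(m,5),right_port (m-1)}"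
  using nm1[OF assms] by auto

lemma NH1_2: assumes "2 \<le> m" "i = 1 \<or> i = m" shows "{u. {u,(i,2)} \<in> G_E m} = {(i,1),(i,3),(i,4)}"
  using nH1_2[OF assms] by auto

lemma NH1_3: assumes "2 \<le> m" "i = 1 \<or> i = m" shows "{u. {u,(i,3)} \<in> G_E m} = {(i,2),(i,4),(i,5)}"
  using nH1_3[OF assms] by auto

lemma NH1_4: assumes "2 \<le> m" "i = 1 \<or> i = m" shows "{u. {u,(i,4)} \<in> G_E m} = {(i,2),(i,3),(i,5)}"
  using nH1_4[OF assms] by auto

lemma NH1_5: assumes "2 \<le> m" "i = 1 \<or> i = m" shows "{u. {u,(i,5)} \<in> G_E m} = {(i,1),(i,3),(i,4)}"
  using nH1_5[OF assms] by auto

lemma NH2_1: assumes "1 < i" "i < m" shows "{u. {u,(i,1)} \<in> G_E m} = {(i,2),(i,6),right_port(i-1)}"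
  using nH2_1[OF assms] by auto

lemma NH2_2: assumes "1 < i" "i < m" shows "{u. {u,(i,2)} \<in> G_E m} = {(i,1),(i,3),(i,5)}"
  using nH2_2[OF assms] by auto

lemma NH2_3: assumes "1 < i" "i < m" shows "{u. {u,(i,3)} \<in> G_E m} = {(i,2),(i,4),(i,6)}"
  using nH2_3[OF assms] by auto

lemma NH2_4: assumes "1 < i" "i < m" shows "{u. {u,(i,4)} \<in> G_E m} = {(i,3),(i,5),(i+1,1)}"
  using nH2_4[OF assms] by auto

lemma NH2_5: assumes "1 < i" "i < m" shows "{u. {u,(i,5)} \<in> G_E m} = {(i,2),(i,4),(i,6)}"
  using nH2_5[OF assms] by auto

lemma NH2_6: assumes "1 < i" "i < m" shows "{u. {u,(i,6)} \<in> G_E m} = {(i,1),(i,3),(i,5)}"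
  using nH2_6[OF assms] by auto

lemmas Ns = N11 Nm1 NH1_2 NH1_3 NH1_4 NH1_5 NH2_1 NH2_2 NH2_3 NH2_4 NH2_5 NH2_6

lemmas nbrs = n11 nm1 nH1_2 nH1_3 nH1_4 nH1_5 nH2_1 nH2_2 nH2_3 nH2_4 nH2_5 nH2_6

lemma GV_cases:
  assumes "(i,j) \<in> G_V m" "2 \<le> m"
  obtains (c11) "i = 1" "j = 1" | (cm1) "i = m" "j = 1"
   | (a2) "i = 1 \<or> i = m" "j = 2" | (a3) "i = 1 \<or> i = m" "j = 3"
   | (a4) "i = 1 \<or> i = m" "j = 4" | (a5) "i = 1 \<or> i = m" "j = 5"
   | (b1) "1 < i" "i < m" "j = 1" | (b2) "1 < i" "i < m" "j = 2" | (b3) "1 < i" "i < m" "j = 3"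
   | (b4) "1 < i" "i < m" "j = 4" | (b5) "1 < i" "i < m" "j = 5" | (b6) "1 < i" "i < m" "j = 6"
proof -
  have a: "1 \<le> i" "i \<le> m" "1 \<le> j" "j \<le> (if i = 1 \<or> i = m then 5 else 6)"
    using assms(1) unfolding G_V_def by auto
  show thesis
  proof (cases "i = 1 \<or> i = m")
    case True
    then have "j \<in> {1,2,3,4,5}" using a by auto
    then show ?thesis using that True by auto
  next
    case False
    then have "j \<in> {1,2,3,4,5,6}" using a by auto
    then show ?thesis using that False a by auto
  qed
qed

lemma deg3: assumes "2 \<le> m" "v \<in> G_V m" shows "degree (G_E m) v = 3"
proof -
  obtain i j where v: "v = (i,j)" by (cases v)
  from assms(2)[unfolded v] assms(1) show ?thesis
  proof (cases rule: GV_cases)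
    case c11 then show ?thesis using N11[OF assms(1)] by (simp add: v degree_def right_port_def)
  next
    case cm1 then show ?thesis using Nm1[OF assms(1)] by (simp add: v degree_def right_port_def)
  next
    case a2 then show ?thesis using NH1_2[OF assms(1) a2(1)] by (simp add: v degree_def right_port_def)
  next
    case a3 then show ?thesis using NH1_3[OF assms(1) a3(1)] by (simp add: v degree_def right_port_def)
  next
    case a4 then show ?thesis using NH1_4[OF assms(1) a4(1)] by (simp add: v degree_def right_port_def)
  next
    case a5 then show ?thesis using NH1_5[OF assms(1) a5(1)] by (simp add: v degree_def right_port_def)
  next
    case b1 then show ?thesis using NH2_1[OF b1(1,2)] by (simp add: v degree_def right_port_def)
  next
    case b2 then show ?thesis using NH2_2[OF b2(1,2)] by (simp add: v degree_def right_port_def)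
  next
    case b3 then show ?thesis using NH2_3[OF b3(1,2)] by (simp add: v degree_def right_port_def)
  next
    case b4 then show ?thesis using NH2_4[OF b4(1,2)] by (simp add: v degree_def right_port_def)
  next
    case b5 then show ?thesis using NH2_5[OF b5(1,2)] by (simp add: v degree_def right_port_def)
  next
    case b6 then show ?thesis using NH2_6[OF b6(1,2)] by (simp add: v degree_def right_port_def)
  qed
qed

lemma cubic: "2 \<le> m \<Longrightarrow> cubic (G_V m) (G_E m)"
  unfolding cubic_def using deg3 by blast


lemma reach_sym: assumes "reach E x y" shows "reach E y x"
  using assms unfolding reach_def
proof (induction rule: rtranclp_induct)
  case base then show ?case by simp
next
  case (step y z)
  then have "{z,y} \<in> E" by (simp add: insert_commute)
  then show ?case using step(3) by (simp add: converse_rtranclp_into_rtranclp)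
qed

lemma reach_edge: "{x,y} \<in> E \<Longrightarrow> reach E y z \<Longrightarrow> reach E x z"
  unfolding reach_def by (simp add: converse_rtranclp_into_rtranclp)

lemma down_edge0: assumes "2 \<le> m" "(i,j) \<in> G_V m" "2 \<le> j" shows "{(i,j-1), (i,j)} \<in> G_E m"
  using assms(2,1,3)
proof (cases rule: GV_cases)
  case a2 then show ?thesis using nH1_2[OF assms(1) a2(1)] by simp
next
  case a3 then show ?thesis using nH1_3[OF assms(1) a3(1)] by simp
next
  case a4 then show ?thesis using nH1_4[OF assms(1) a4(1)] by simp
next
  case a5 then show ?thesis using nH1_5[OF assms(1) a5(1)] by simp
next
  case b2 then show ?thesis using nH2_2[OF b2(1,2)] by simp
next
  case b3 then show ?thesis using nH2_3[OF b3(1,2)] by simp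
next
  case b4 then show ?thesis using nH2_4[OF b4(1,2)] by simp
next
  case b5 then show ?thesis using nH2_5[OF b5(1,2)] by simp
next
  case b6 then show ?thesis using nH2_6[OF b6(1,2)] by simp
qed (use assms(3) in simp_all)

lemma down_edge: assumes "2 \<le> m" "(i,j) \<in> G_V m" "2 \<le> j" shows "{(i,j), (i,j-1)} \<in> G_E m"
  using down_edge0[OF assms] by (simp add: insert_commute)

lemma reach_local: assumes "2 \<le> m" "(i,j) \<in> G_V m" shows "reach (G_E m) (i,j) (i,1)"
  using assms(2)
proof (induction j)
  case 0 then show ?case by (simp add: G_V_def)
next
  case (Suc j)
  show ?case
  proof (cases "j = 0")
    case True then show ?thesis by (simp add: reach_def)
  next
    case False
    have e: "{(i, Suc j), (i, j)} \<in> G_E m" using down_edge[OF assms(1) Suc.prems] False by simp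
    have "(i,j) \<in> G_V m" using Suc.prems False unfolding G_V_def by auto
    then show ?thesis using Suc.IH reach_edge[OF e] by blast
  qed
qed

lemma rp_V: "1 \<le> i \<Longrightarrow> i < m \<Longrightarrow> right_port i \<in> G_V m"
  unfolding right_port_def G_V_def by auto

lemma reach_11: assumes "2 \<le> m" "1 \<le> i" "i \<le> m" shows "reach (G_E m) (i,1) (1,1)"
  using assms(2,3)
proof (induction i)
  case 0 then show ?case by simp
next
  case (Suc i)
  show ?case
  proof (cases "i = 0")
    case True then show ?thesis by (simp add: reach_def)
  next
    case False
    have e: "{(Suc i, 1), right_port i} \<in> G_E m" using port_edge[of i m] False Suc.prems
      by (simp add: insert_commute)
    have r: "reach (G_E m) (right_port i) (i,1)"
    proof -
      obtain a b where ab: "right_port i = (a,b)" by (cases "right_port i")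
      then have "a = i" unfolding right_port_def by (auto split: if_splits)
      then show ?thesis using reach_local[OF assms(1), of a b] rp_V[of i m] False Suc.prems ab by simp
    qed
    have "reach (G_E m) (i,1) (1,1)" using Suc False by simp
    then show ?thesis using reach_edge[OF e] r unfolding reach_def by (meson rtranclp_trans)
  qed
qed

lemma reach_all: assumes "2 \<le> m" "v \<in> G_V m" shows "reach (G_E m) v (1,1)"
proof -
  obtain i j where v: "v = (i,j)" by (cases v)
  have "1 \<le> i" "i \<le> m" using assms(2) unfolding v G_V_def by auto
  then show ?thesis using reach_local[OF assms(1)] assms(2) reach_11[OF assms(1)] unfolding v reach_def
    by (meson rtranclp_trans)
qed

lemma ncomp1: assumes "2 \<le> m" shows "num_components (G_V m) (G_E m) = 1"
proof -
  have "(\<lambda>u. {v \<in> G_V m. reach (G_E m) u v}) ` G_V m = {G_V m}"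
  proof -
    have "{v \<in> G_V m. reach (G_E m) u v} = G_V m" if "u \<in> G_V m" for u
    proof -
      have "reach (G_E m) u v" if "v \<in> G_V m" for v
      proof -
        have "reach (G_E m) u (1,1)" using reach_all[OF assms \<open>u \<in> G_V m\<close>] .
        moreover have "reach (G_E m) (1,1) v" using reach_sym[OF reach_all[OF assms that]] .
        ultimately show ?thesis unfolding reach_def by (rule rtranclp_trans)
      qed
      then show ?thesis by auto
    qed
    moreover have "(1,1) \<in> G_V m" using assms unfolding G_V_def by auto
    ultimately show ?thesis by auto
  qed
  then show ?thesis unfolding num_components_def by simp
qed



definition br :: "(nat \<times> nat) set" where "br = {(1,1),(2,1)}"

lemma block1_closed:
  assumes "2 \<le> m" "reach (G_E m - {br}) (1,1) w" shows "fst w = 1"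
  using assms(2) unfolding reach_def
proof (induction rule: rtranclp_induct)
  case base then show ?case by simp
next
  case (step y z)
  obtain j where y: "y = (1,j)" using step(3) by (cases y) auto
  have e: "{z, (1,j)} \<in> G_E m" "{z,(1,j)} \<noteq> br" using step(2) y by (auto simp: insert_commute)
  then have "(1,j) \<in> G_V m" using edge_V by blast
  from this assms(1) show ?case
  proof (cases rule: GV_cases)
    case c11
    then have "z \<in> {(1,2),(1,5),(2,1)}" using n11[OF assms(1), of z] e(1) by simp
    moreover have "z \<noteq> (2,1)" using e(2) c11 by (auto simp: br_def insert_commute)
    ultimately show ?thesis by auto
  next
    case a2
    then have "z \<in> {(1,1),(1,3),(1,4)}" using nH1_2[OF assms(1), of 1 z] e(1) by simp
    then show ?thesis by auto
  next
    case a3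
    then have "z \<in> {(1,2),(1,4),(1,5)}" using nH1_3[OF assms(1), of 1 z] e(1) by simp
    then show ?thesis by auto
  next
    case a4
    then have "z \<in> {(1,2),(1,3),(1,5)}" using nH1_4[OF assms(1), of 1 z] e(1) by simp
    then show ?thesis by auto
  next
    case a5
    then have "z \<in> {(1,1),(1,3),(1,4)}" using nH1_5[OF assms(1), of 1 z] e(1) by simp
    then show ?thesis by auto
  next
    case cm1 then show ?thesis using assms(1) by linarith
  next
    case b1 then show ?thesis by linarith
  next
    case b2 then show ?thesis by linarith
  next
    case b3 then show ?thesis by linarith
  next
    case b4 then show ?thesis by linarith
  next
    case b5 then show ?thesis by linarith
  next
    case b6 then show ?thesis by linarith
  qed
qed

lemma ncomp2: assumes "2 \<le> m" shows "2 \<le> num_components (G_V m) (G_E m - {br})"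
proof -
  let ?c = "\<lambda>u. {v \<in> G_V m. reach (G_E m - {br}) u v}"
  have V: "(1,1) \<in> G_V m" "(2,1) \<in> G_V m" using assms unfolding G_V_def by auto
  have "(2,1) \<in> ?c (2,1)" using V by (simp add: reach_def)
  moreover have "(2,1) \<notin> ?c (1,1)"
  proof
    assume "(2,1) \<in> ?c (1,1)"
    then have "fst (2::nat,1::nat) = 1" using block1_closed[OF assms, of "(2,1)"] by blast
    then show False by simp
  qed
  ultimately have "?c (1,1) \<noteq> ?c (2,1)" by blast
  then have "card {?c (1,1), ?c (2,1)} = 2" by simp
  moreover have "{?c (1,1), ?c (2,1)} \<subseteq> ?c ` G_V m" using V by auto
  moreover have "finite (?c ` G_V m)" using finite_GV by simp
  ultimately have "card {?c (1,1), ?c (2,1)} \<le> card (?c ` G_V m)" by (intro card_mono)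
  then show ?thesis unfolding num_components_def using \<open>card {?c (1,1), ?c (2,1)} = 2\<close> by linarith
qed

lemma bridged: assumes "2 \<le> m" shows "bridged (G_V m) (G_E m)"
proof -
  have "br \<in> G_E m" using port_edge[of 1 m] assms by (simp add: br_def right_port_def numeral_2_eq_2)
  then have "is_bridge (G_V m) (G_E m) br" unfolding is_bridge_def using ncomp1[OF assms] ncomp2[OF assms] by simp
  then show ?thesis unfolding bridged_def by blast
qed


lemma triangle: assumes "2 \<le> m" shows "has_triangle (G_E m)"
proof -
  have "{(1,2),(1,3)} \<in> G_E m" "{(1,3),(1,4)} \<in> G_E m" "{(1,2),(1,4)} \<in> G_E m"
    by (subst nH1_3[OF assms disjI1[OF refl]], simp, subst nH1_4[OF assms disjI1[OF refl]], simp,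
        subst nH1_4[OF assms disjI1[OF refl]], simp)
  then show ?thesis unfolding has_triangle_def
    by (intro exI[of _ "(1::nat,2::nat)"] exI[of _ "(1::nat,3::nat)"] exI[of _ "(1::nat,4::nat)"]) simp
qed


lemma no3:
  fixes a b c d e f g h :: nat
  assumes "a < 3" "b < 3" "c < 3" "d < 3" "e < 3" "f < 3" "g < 3" "h < 3"
  "a \<noteq> e" "a \<noteq> h" "e \<noteq> h"
  "a \<noteq> b" "a \<noteq> f" "b \<noteq> f"
  "b \<noteq> c" "b \<noteq> g" "c \<noteq> g"
  "c \<noteq> d" "c \<noteq> f" "d \<noteq> f"
  "d \<noteq> e" "d \<noteq> g" "e \<noteq> g"
  shows False
proof -
  have "h \<in> {0,1,2}" "a \<in> {0,1,2}" "e \<in> {0,1,2}" "b \<in> {0,1,2}" "f \<in> {0,1,2}" "c \<in> {0,1,2}" "d \<in> {0,1,2}" "g \<in> {0,1,2}"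
    using assms(1-8) by auto
  then show False using assms(9-) by auto
qed

lemma no_col3:
  assumes m: "2 \<le> m" and pc: "proper_edge_colouring (G_E m) k c" and k: "k \<le> 3"
  shows False
proof -
  have P: "\<And>x y. x \<in> G_E m \<Longrightarrow> y \<in> G_E m \<Longrightarrow> x \<noteq> y \<Longrightarrow> x \<inter> y \<noteq> {} \<Longrightarrow> c x \<noteq> c y"
    using pc unfolding proper_edge_colouring_def by blast
  have P2: "\<And>x y. x \<in> G_E m \<Longrightarrow> y \<in> G_E m \<Longrightarrow> (\<exists>a\<in>x. a \<notin> y) \<Longrightarrow> (\<exists>b\<in>x. b \<in> y) \<Longrightarrow> c x \<noteq> c y"
    by (rule P) blast+
  have L: "\<And>x. x \<in> G_E m \<Longrightarrow> c x < 3" using pc k unfolding proper_edge_colouring_def by fastforce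
  have t: "(1::nat) = 1 \<or> 1 = m" by simp
  have e1: "{(1,1),(1,2)} \<in> G_E m" by (subst nH1_2[OF m t]) simp
  have e2: "{(1,2),(1,3)} \<in> G_E m" by (subst nH1_3[OF m t]) simp
  have e3: "{(1,3),(1,4)} \<in> G_E m" by (subst nH1_4[OF m t]) simp
  have e4: "{(1,4),(1,5)} \<in> G_E m" by (subst nH1_5[OF m t]) simp
  have e5: "{(1,1),(1,5)} \<in> G_E m" by (subst nH1_5[OF m t]) simp
  have e6: "{(1,2),(1,4)} \<in> G_E m" by (subst nH1_4[OF m t]) simp
  have e7: "{(1,3),(1,5)} \<in> G_E m" by (subst nH1_5[OF m t]) simp
  have e8: "{(2,1),(1,1)} \<in> G_E m" by (subst n11[OF m]) simp
  show False
    apply (rule no3[of "c {(1,1),(1,2)}" "c {(1,2),(1,3)}" "c {(1,3),(1,4)}" "c {(1,4),(1,5)}"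
       "c {(1,1),(1,5)}" "c {(1,2),(1,4)}" "c {(1,3),(1,5)}" "c {(2,1),(1,1)}"])
    apply (rule L, fact)+
    apply (rule P2, fact, fact, simp, simp)+
    done
qed

definition hc :: "bool \<Rightarrow> nat set \<Rightarrow> nat" where
 "hc t S = (if t then (if 3\<in>S \<and> 4\<in>S then 3 else if (1\<in>S\<and>2\<in>S) \<or> (4\<in>S\<and>5\<in>S) then 0
     else if (2\<in>S\<and>3\<in>S) \<or> (1\<in>S\<and>5\<in>S) then 1 else 2)
   else (if (1\<in>S\<and>2\<in>S) \<or> (3\<in>S\<and>6\<in>S) \<or> (4\<in>S\<and>5\<in>S) then 0
     else if (1\<in>S\<and>6\<in>S) \<or> (2\<in>S\<and>5\<in>S) \<or> (3\<in>S\<and>4\<in>S) then 1 else 2))"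

definition col :: "nat \<Rightarrow> (nat \<times> nat) set \<Rightarrow> nat" where
 "col m e = (if \<exists>x\<in>e. \<exists>y\<in>e. fst x \<noteq> fst y then 3 else hc (\<exists>x\<in>e. fst x = 1 \<or> fst x = m) (snd ` e))"
lemma ifle: "(a::nat) \<le> c \<Longrightarrow> b \<le> c \<Longrightarrow> (if P then a else b) \<le> c" by simp
lemma hc_le: "hc t S \<le> 3" unfolding hc_def by (intro ifle) (simp_all only: order_refl le_numeral_extra zero_le)
lemma col_lt: "col m e < 4"
proof -
  have "col m e \<le> 3" unfolding col_def by (intro ifle order_refl hc_le)
  then show ?thesis by linarith
qed
lemma col_vertex:
  assumes m: "2 \<le> m" and v: "v \<in> G_V m"
  shows "\<forall>u\<in>{u. {u,v} \<in> G_E m}. \<forall>w\<in>{u. {u,v} \<in> G_E m}. u \<noteq> w \<longrightarrow> col m {u,v} \<noteq> col m {w,v}"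
proof -
  obtain i j where vv: "v = (i,j)" by (cases v)
  from v[unfolded vv] m show ?thesis
  proof (cases rule: GV_cases)
    case c11 then show ?thesis using N11[OF m] by (simp add: vv col_def hc_def)
  next
    case cm1 then show ?thesis using Nm1[OF m] m by (simp add: vv col_def hc_def right_port_def)
  next
    case a2 then show ?thesis using NH1_2[OF m a2(1)] by (simp add: vv col_def hc_def)
  next
    case a3 then show ?thesis using NH1_3[OF m a3(1)] by (simp add: vv col_def hc_def)
  next
    case a4 then show ?thesis using NH1_4[OF m a4(1)] by (simp add: vv col_def hc_def)
  next
    case a5 then show ?thesis using NH1_5[OF m a5(1)] by (simp add: vv col_def hc_def)
  next
    case b1 then show ?thesis using NH2_1[OF b1(1,2)] by (simp add: vv col_def hc_def right_port_def)
  next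
    case b2 then show ?thesis using NH2_2[OF b2(1,2)] by (simp add: vv col_def hc_def)
  next
    case b3 then show ?thesis using NH2_3[OF b3(1,2)] by (simp add: vv col_def hc_def)
  next
    case b4 then show ?thesis using NH2_4[OF b4(1,2)] by (simp add: vv col_def hc_def)
  next
    case b5 then show ?thesis using NH2_5[OF b5(1,2)] by (simp add: vv col_def hc_def)
  next
    case b6 then show ?thesis using NH2_6[OF b6(1,2)] by (simp add: vv col_def hc_def)
  qed
qed


lemma edge_other: assumes "e \<in> G_E m" "v \<in> e" shows "\<exists>u. e = {u,v}"
proof -
  obtain a b where e: "e = {a,b}" using GE_doubleton[OF assms(1)] by blast
  show ?thesis
  proof (cases "v = a")
    case True then show ?thesis using e by (intro exI[of _ b]) (simp add: insert_commute)
  next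
    case False then have "v = b" using assms(2) e by simp
    then show ?thesis using e by (intro exI[of _ a]) simp
  qed
qed

lemma col_proper: assumes m: "2 \<le> m" shows "proper_edge_colouring (G_E m) 4 (col m)"
  unfolding proper_edge_colouring_def
proof (intro conjI ballI impI)
  fix e show "col m e < 4" by (rule col_lt)
next
  fix e f assume e: "e \<in> G_E m" and f: "f \<in> G_E m" and h: "e \<noteq> f \<and> e \<inter> f \<noteq> {}"
  then obtain v where v: "v \<in> e" "v \<in> f" by blast
  obtain u where u: "e = {u,v}" using edge_other[OF e v(1)] by blast
  obtain w where w: "f = {w,v}" using edge_other[OF f v(2)] by blast
  have vV: "v \<in> G_V m" using e u edge_V by blast
  have "u \<noteq> w" using h u w by blast
  then show "col m e \<noteq> col m f" using col_vertex[OF m vV] e f u w by blast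
qed

lemma chi4: assumes m: "2 \<le> m" shows "chromatic_index (G_E m) = 4"
  unfolding chromatic_index_def
proof (rule Least_equality)
  show "\<exists>c. proper_edge_colouring (G_E m) 4 c" using col_proper[OF m] by blast
next
  fix k assume "\<exists>c. proper_edge_colouring (G_E m) k c"
  then obtain c where "proper_edge_colouring (G_E m) k c" by blast
  then show "4 \<le> k" using no_col3[OF m, of k c] by (cases "k \<le> 3") auto
qed

lemma maxdeg3: assumes m: "2 \<le> m" shows "max_degree (G_V m) (G_E m) = 3"
proof -
  have "(1,1) \<in> G_V m" using m unfolding G_V_def by auto
  then have "degree (G_E m) ` G_V m = {3}" using deg3[OF m] by force
  then show ?thesis unfolding max_degree_def by simp
qed

lemma class2: assumes m: "2 \<le> m" shows "class2 (G_V m) (G_E m)"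
  unfolding class2_def using chi4[OF m] maxdeg3[OF m] by simp


lemma conv_mono: "X \<subseteq> conv_step V E X" unfolding conv_step_def by auto

lemma conv_sub: "X \<subseteq> V \<Longrightarrow> conv_step V E X \<subseteq> V" unfolding conv_step_def by auto

lemma nb_V: "{u,v} \<in> G_E m \<Longrightarrow> u \<in> G_V m"
  using edge_V[of v u m] by (simp add: insert_commute)

lemma conv_two:
  assumes "v \<in> G_V m" "a \<in> X" "b \<in> X" "a \<noteq> b" "{a,v} \<in> G_E m" "{b,v} \<in> G_E m"
  shows "v \<in> conv_step (G_V m) (G_E m) X"
proof -
  have fin: "finite {u \<in> X. {u,v} \<in> G_E m}"
    by (rule finite_subset[OF _ finite_GV[of m]]) (auto dest: nb_V)
  have "{a,b} \<subseteq> {u \<in> X. {u,v} \<in> G_E m}" using assms by auto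
  then have "card {a,b} \<le> card {u \<in> X. {u,v} \<in> G_E m}" using fin by (rule card_mono[rotated])
  then have "2 \<le> card {u \<in> X. {u,v} \<in> G_E m}" using assms(4) by simp
  then show ?thesis using assms(1) unfolding conv_step_def by blast
qed

definition S0 :: "nat \<Rightarrow> (nat \<times> nat) set" where
  "S0 m = (\<lambda>i. (i,2)) ` {1..m} \<union> (\<lambda>i. (i, if i = 1 \<or> i = m then 5 else 6)) ` {1..m}"

lemma S0_sub: "S0 m \<subseteq> G_V m" unfolding S0_def G_V_def by auto

lemma card_S0: "card (S0 m) = 2 * m"
proof -
  have "card ((\<lambda>i. (i,2::nat)) ` {1..m}) = m" by (subst card_image) (auto simp: inj_on_def)
  moreover have "card ((\<lambda>i. (i, if i = 1 \<or> i = m then 5 else 6::nat)) ` {1..m}) = m"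
    by (subst card_image) (auto simp: inj_on_def)
  moreover have "(\<lambda>i. (i,2::nat)) ` {1..m} \<inter> (\<lambda>i. (i, if i = 1 \<or> i = m then 5 else 6::nat)) ` {1..m} = {}"
    by (auto split: if_splits)
  ultimately show ?thesis unfolding S0_def by (subst card_Un_disjoint) auto
qed

lemma S0_mem2: "1 \<le> i \<Longrightarrow> i \<le> m \<Longrightarrow> (i,2) \<in> S0 m" unfolding S0_def by auto
lemma S0_mem5: "1 \<le> i \<Longrightarrow> i \<le> m \<Longrightarrow> i = 1 \<or> i = m \<Longrightarrow> (i,5) \<in> S0 m" unfolding S0_def by force
lemma S0_mem6: "1 < i \<Longrightarrow> i < m \<Longrightarrow> (i,6) \<in> S0 m" unfolding S0_def by force


lemma S1_mem:
  assumes m: "2 \<le> m" and v: "(i,j) \<in> G_V m" and n4: "\<not> (1 < i \<and> i < m \<and> j = 4)"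
  shows "(i,j) \<in> conv_step (G_V m) (G_E m) (S0 m)"
proof -
  let ?X = "S0 m"
  have sub: "?X \<subseteq> conv_step (G_V m) (G_E m) ?X" by (rule conv_mono)
  have t1: "(1::nat) = 1 \<or> 1 = m" by simp
  have m1: "1 \<le> m" and m1': "1 \<le> m" using m by auto
  have tm: "m = 1 \<or> m = m" by simp
  have iV: "1 \<le> i" "i \<le> m" using v unfolding G_V_def by auto
  from v m show ?thesis
  proof (cases rule: GV_cases)
    case c11
    have v': "(1,1) \<in> G_V m" using v c11 by simp
    have e1: "{(1,2),(1,1)} \<in> G_E m" by (subst n11[OF m]) simp
    have e2: "{(1,5),(1,1)} \<in> G_E m" by (subst n11[OF m]) simp
    have "(1,1) \<in> conv_step (G_V m) (G_E m) ?X"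
      by (rule conv_two[OF v' S0_mem2[of 1 m, OF order_refl m1] S0_mem5[of 1 m, OF order_refl m1 t1] _ e1 e2]) simp
    then show ?thesis using c11 by simp
  next
    case cm1
    have v': "(m,1) \<in> G_V m" using v cm1 by simp
    have e1: "{(m,2),(m,1)} \<in> G_E m" by (subst nm1[OF m]) simp
    have e2: "{(m,5),(m,1)} \<in> G_E m" by (subst nm1[OF m]) simp
    have "(m,1) \<in> conv_step (G_V m) (G_E m) ?X"
      by (rule conv_two[OF v' S0_mem2[of m m, OF m1' order_refl] S0_mem5[of m m, OF m1' order_refl tm] _ e1 e2]) simp
    then show ?thesis using cm1 by simp
  next
    case a2 then show ?thesis using sub S0_mem2[of i m] v unfolding G_V_def by auto
  next
    case a3
    have v': "(i,3) \<in> G_V m" using v a3 by simp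
    have e1: "{(i,2),(i,3)} \<in> G_E m" by (subst nH1_3[OF m a3(1)]) simp
    have e2: "{(i,5),(i,3)} \<in> G_E m" by (subst nH1_3[OF m a3(1)]) simp
    have "(i,3) \<in> conv_step (G_V m) (G_E m) ?X"
      by (rule conv_two[OF v' S0_mem2[OF iV] S0_mem5[OF iV a3(1)] _ e1 e2]) simp
    then show ?thesis using a3 by simp
  next
    case a4
    have v': "(i,4) \<in> G_V m" using v a4 by simp
    have e1: "{(i,2),(i,4)} \<in> G_E m" by (subst nH1_4[OF m a4(1)]) simp
    have e2: "{(i,5),(i,4)} \<in> G_E m" by (subst nH1_4[OF m a4(1)]) simp
    have "(i,4) \<in> conv_step (G_V m) (G_E m) ?X"
      by (rule conv_two[OF v' S0_mem2[OF iV] S0_mem5[OF iV a4(1)] _ e1 e2]) simp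
    then show ?thesis using a4 by simp
  next
    case a5 then show ?thesis using sub S0_mem5[of i m] v unfolding G_V_def by auto
  next
    case b1
    have v': "(i,1) \<in> G_V m" using v b1 by simp
    have e1: "{(i,2),(i,1)} \<in> G_E m" by (subst nH2_1[OF b1(1,2)]) simp
    have e2: "{(i,6),(i,1)} \<in> G_E m" by (subst nH2_1[OF b1(1,2)]) simp
    have "(i,1) \<in> conv_step (G_V m) (G_E m) ?X"
      by (rule conv_two[OF v' S0_mem2[OF iV] S0_mem6[OF b1(1,2)] _ e1 e2]) simp
    then show ?thesis using b1 by simp
  next
    case b2 then show ?thesis using sub S0_mem2[of i m] v unfolding G_V_def by auto
  next
    case b3
    have v': "(i,3) \<in> G_V m" using v b3 by simp
    have e1: "{(i,2),(i,3)} \<in> G_E m" by (subst nH2_3[OF b3(1,2)]) simp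
    have e2: "{(i,6),(i,3)} \<in> G_E m" by (subst nH2_3[OF b3(1,2)]) simp
    have "(i,3) \<in> conv_step (G_V m) (G_E m) ?X"
      by (rule conv_two[OF v' S0_mem2[OF iV] S0_mem6[OF b3(1,2)] _ e1 e2]) simp
    then show ?thesis using b3 by simp
  next
    case b4 then show ?thesis using n4 by simp
  next
    case b5
    have v': "(i,5) \<in> G_V m" using v b5 by simp
    have e1: "{(i,2),(i,5)} \<in> G_E m" by (subst nH2_5[OF b5(1,2)]) simp
    have e2: "{(i,6),(i,5)} \<in> G_E m" by (subst nH2_5[OF b5(1,2)]) simp
    have "(i,5) \<in> conv_step (G_V m) (G_E m) ?X"
      by (rule conv_two[OF v' S0_mem2[OF iV] S0_mem6[OF b5(1,2)] _ e1 e2]) simp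
    then show ?thesis using b5 by simp
  next
    case b6 then show ?thesis using sub S0_mem6[of i m] by auto
  qed
qed


lemma S2_all:
  assumes m: "2 \<le> m"
  shows "(conv_step (G_V m) (G_E m) ^^ 2) (S0 m) = G_V m"
proof -
  let ?f = "conv_step (G_V m) (G_E m)"
  have e: "(?f ^^ 2) (S0 m) = ?f (?f (S0 m))" by (simp add: numeral_2_eq_2)
  have s1: "?f (S0 m) \<subseteq> G_V m" by (rule conv_sub[OF S0_sub])
  have "?f (?f (S0 m)) \<subseteq> G_V m" by (rule conv_sub[OF s1])
  moreover have "G_V m \<subseteq> ?f (?f (S0 m))"
  proof
    fix v assume v: "v \<in> G_V m"
    obtain i j where vv: "v = (i,j)" by (cases v)
    show "v \<in> ?f (?f (S0 m))"
    proof (cases "1 < i \<and> i < m \<and> j = 4")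
      case True
      then have i: "1 < i" "i < m" and j: "j = 4" by auto
      have V3: "(i,3) \<in> G_V m" "(i,5) \<in> G_V m" using i unfolding G_V_def by auto
      have m3: "(i,3) \<in> ?f (S0 m)" by (rule S1_mem[OF m V3(1)]) simp
      have m5: "(i,5) \<in> ?f (S0 m)" by (rule S1_mem[OF m V3(2)]) simp
      have e1: "{(i,3),(i,4)} \<in> G_E m" by (subst nH2_4[OF i]) simp
      have e2: "{(i,5),(i,4)} \<in> G_E m" by (subst nH2_4[OF i]) simp
      have v4: "(i,4) \<in> G_V m" using v vv j by simp
      have "(i,4) \<in> ?f (?f (S0 m))" using conv_two[OF v4 m3 m5 _ e1 e2] by simp
      then show ?thesis using vv j by simp
    next
      case False
      then have "(i,j) \<in> ?f (S0 m)" by (intro S1_mem[OF m v[unfolded vv]])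
      then show ?thesis using conv_mono[of "?f (S0 m)" "G_V m" "G_E m"] vv by blast
    qed
  qed
  ultimately show ?thesis using e by blast
qed

lemma upper: assumes m: "2 \<le> m" shows "is_2conversion_set (G_V m) (G_E m) (S0 m)"
  unfolding is_2conversion_set_def using S0_sub S2_all[OF m] by blast


lemma card_le1: assumes "\<forall>x\<in>A. \<forall>y\<in>A. x = y" shows "card A \<le> 1"
proof (cases "A = {}")
  case True then show ?thesis by simp
next
  case False
  then obtain a where a: "a \<in> A" by blast
  then have "A \<subseteq> {a}" using assms by blast
  then have "card A \<le> card {a}" by (intro card_mono) auto
  then show ?thesis by simp
qed

definition IM :: "'a set set \<Rightarrow> 'a set \<Rightarrow> bool" where
  "IM E T \<longleftrightarrow> (\<forall>v\<in>T. \<forall>u1\<in>{u. {u,v} \<in> E}. \<forall>u2\<in>{u. {u,v} \<in> E}. u1 \<notin> T \<longrightarrow> u2 \<notin> T \<longrightarrow> u1 = u2)"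

lemma immune_gen:
  assumes T: "T \<subseteq> V" "T \<noteq> {}" "S \<inter> T = {}" and im: "IM E T"
  shows "(conv_step V E ^^ t) S \<noteq> V"
proof -
  have inv: "(conv_step V E ^^ t) S \<inter> T = {}"
  proof (induction t)
    case 0 then show ?case using T(3) by simp
  next
    case (Suc t)
    let ?X = "(conv_step V E ^^ t) S"
    have "v \<notin> conv_step V E ?X" if v: "v \<in> T" for v
    proof
      assume "v \<in> conv_step V E ?X"
      moreover have "v \<notin> ?X" using Suc.IH v by blast
      ultimately have c: "2 \<le> card {u \<in> ?X. {u,v} \<in> E}" unfolding conv_step_def by blast
      have "\<forall>x\<in>{u \<in> ?X. {u,v} \<in> E}. \<forall>y\<in>{u \<in> ?X. {u,v} \<in> E}. x = y"
      proof (intro ballI)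
        fix x y assume x: "x \<in> {u \<in> ?X. {u,v} \<in> E}" and y: "y \<in> {u \<in> ?X. {u,v} \<in> E}"
        then have "x \<notin> T" "y \<notin> T" using Suc.IH by blast+
        then show "x = y" using im v x y unfolding IM_def by blast
      qed
      then have "card {u \<in> ?X. {u,v} \<in> E} \<le> 1" by (rule card_le1)
      then show False using c by linarith
    qed
    then show ?case by auto
  qed
  show ?thesis
  proof
    assume "(conv_step V E ^^ t) S = V"
    then show False using inv T(1,2) by blast
  qed
qed

definition Tl :: "bool \<Rightarrow> nat \<Rightarrow> nat set" where
 "Tl t x = (if t then (if x = 2 then {3,4,5} else if x = 3 then {1,2,4,5} else if x = 4 then {1,2,3,5} else {2,3,4})
   else (if x = 2 then {3,4,5,6} else if x = 3 then {1,2,5,6} else if x = 5 then {1,2,3,6}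
         else if x = 6 then {2,3,4,5} else {2,3,5,6}))"

lemma Tl_ne: "Tl t x \<noteq> {}" unfolding Tl_def by (simp split: if_split)
lemma Tl_nx: "x \<notin> Tl t x" unfolding Tl_def by (simp split: if_split)
lemma Tl_range: "b \<in> Tl t x \<Longrightarrow> 1 \<le> b \<and> b \<le> (if t then 5 else 6)"
  unfolding Tl_def by (simp split: if_splits) (elim disjE; simp)+

lemma IM_intro:
  assumes "\<And>j. j \<in> A \<Longrightarrow> \<forall>u1\<in>{u. {u,(i,j)} \<in> E}. \<forall>u2\<in>{u. {u,(i,j)} \<in> E}.
      u1 \<notin> {v. fst v = i \<and> snd v \<in> A} \<longrightarrow> u2 \<notin> {v. fst v = i \<and> snd v \<in> A} \<longrightarrow> u1 = u2"
  shows "IM E {v. fst v = i \<and> snd v \<in> A}"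
  unfolding IM_def
proof (intro ballI)
  fix v u1 u2 assume v: "v \<in> {v. fst v = i \<and> snd v \<in> A}"
  then obtain j where vj: "v = (i,j)" "j \<in> A" by (cases v) auto
  assume "u1 \<in> {u. {u,v} \<in> E}" "u2 \<in> {u. {u,v} \<in> E}"
  then show "u1 \<notin> {v. fst v = i \<and> snd v \<in> A} \<longrightarrow> u2 \<notin> {v. fst v = i \<and> snd v \<in> A} \<longrightarrow> u1 = u2"
    using assms[OF vj(2)] vj(1) by blast
qed

lemma NH1_1: assumes m: "2 \<le> m" and t: "i = 1 \<or> i = m"
  obtains p where "fst p \<noteq> i" "{u. {u,(i,1)} \<in> G_E m} = {(i,2),(i,5),p}"
proof (cases "i = 1")
  case True then show ?thesis using that[of "(2,1)"] N11[OF m] by simp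
next
  case False
  then have im: "i = m" using t by simp
  have "fst (right_port (m-1)) \<noteq> m" using m unfolding right_port_def by auto
  then show ?thesis using that[of "right_port (m-1)"] Nm1[OF m] im by simp
qed

lemma NH2_1': assumes "1 < i" "i < m"
  obtains p where "fst p \<noteq> i" "{u. {u,(i,1)} \<in> G_E m} = {(i,2),(i,6),p}"
proof -
  have "fst (right_port (i-1)) \<noteq> i" using assms unfolding right_port_def by auto
  then show ?thesis using that[of "right_port (i-1)"] NH2_1[OF assms] by simp
qed

lemma imm_H1: assumes m: "2 \<le> m" and t: "i = 1 \<or> i = m"
  shows "IM (G_E m) {v. fst v = i \<and> snd v \<in> Tl True x}"
proof -
  obtain p where p: "fst p \<noteq> i" "{u. {u,(i,1)} \<in> G_E m} = {(i,2),(i,5),p}" using NH1_1[OF m t] by blast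
  have pn: "\<And>A. p \<notin> {v. fst v = i \<and> snd v \<in> A}" using p(1) by auto
  note N = p(2) NH1_2[OF m t] NH1_3[OF m t] NH1_4[OF m t] NH1_5[OF m t]
  show ?thesis
  proof (rule IM_intro)
    fix j assume j: "j \<in> Tl True x"
    then have "j = 1 \<or> j = 2 \<or> j = 3 \<or> j = 4 \<or> j = 5" using Tl_range[OF j] by auto
    then show "\<forall>u1\<in>{u. {u,(i,j)} \<in> G_E m}. \<forall>u2\<in>{u. {u,(i,j)} \<in> G_E m}.
      u1 \<notin> {v. fst v = i \<and> snd v \<in> Tl True x} \<longrightarrow> u2 \<notin> {v. fst v = i \<and> snd v \<in> Tl True x} \<longrightarrow> u1 = u2"
      using j pn[of "Tl True x"] unfolding Tl_def
      by (elim disjE; simp only: N; simp split: if_splits)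
  qed
qed

lemma imm_H2: assumes i: "1 < i" "i < m"
  shows "IM (G_E m) {v. fst v = i \<and> snd v \<in> Tl False x}"
proof -
  obtain p where p: "fst p \<noteq> i" "{u. {u,(i,1)} \<in> G_E m} = {(i,2),(i,6),p}" using NH2_1'[OF i] by blast
  have pn: "\<And>A. p \<notin> {v. fst v = i \<and> snd v \<in> A}" using p(1) by auto
  have qn: "\<And>A. (i+1,1) \<notin> {v. fst v = i \<and> snd v \<in> A}" by auto
  note N = p(2) NH2_2[OF i] NH2_3[OF i] NH2_4[OF i] NH2_5[OF i] NH2_6[OF i]
  show ?thesis
  proof (rule IM_intro)
    fix j assume j: "j \<in> Tl False x"
    then have "j = 1 \<or> j = 2 \<or> j = 3 \<or> j = 4 \<or> j = 5 \<or> j = 6" using Tl_range[OF j] by auto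
    then show "\<forall>u1\<in>{u. {u,(i,j)} \<in> G_E m}. \<forall>u2\<in>{u. {u,(i,j)} \<in> G_E m}.
      u1 \<notin> {v. fst v = i \<and> snd v \<in> Tl False x} \<longrightarrow> u2 \<notin> {v. fst v = i \<and> snd v \<in> Tl False x} \<longrightarrow> u1 = u2"
      using j pn[of "Tl False x"] qn[of "Tl False x"] unfolding Tl_def
      by (elim disjE; simp only: N; simp split: if_splits)
  qed
qed


lemma block_lb:
  assumes m: "2 \<le> m" and cs: "is_2conversion_set (G_V m) (G_E m) S" and i: "1 \<le> i" "i \<le> m"
  shows "2 \<le> card {v \<in> S. fst v = i}"
proof (rule ccontr)
  assume "\<not> 2 \<le> card {v \<in> S. fst v = i}"
  then have c1: "card {v \<in> S. fst v = i} \<le> 1" by simp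
  have SV: "S \<subseteq> G_V m" using cs unfolding is_2conversion_set_def by blast
  have finB: "finite {v \<in> S. fst v = i}" using finite_subset[OF SV finite_GV] by simp
  obtain x where hx: "\<forall>v\<in>S. fst v = i \<longrightarrow> snd v = x"
  proof (cases "{v \<in> S. fst v = i} = {}")
    case True then show ?thesis using that[of 0] by blast
  next
    case False
    then obtain b where b: "b \<in> {v \<in> S. fst v = i}" by blast
    have "\<forall>a1\<in>{v \<in> S. fst v = i}. \<forall>a2\<in>{v \<in> S. fst v = i}. a1 = a2"
      using card_le_Suc0_iff_eq[OF finB] c1 by simp
    then have "\<forall>v\<in>{v \<in> S. fst v = i}. v = b" using b by blast
    then have "\<forall>v\<in>S. fst v = i \<longrightarrow> snd v = snd b" by auto
    then show ?thesis by (rule that)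
  qed
  define t where "t = (i = 1 \<or> i = m)"
  define T where "T = {v. fst v = i \<and> snd v \<in> Tl t x}"
  have TV: "T \<subseteq> G_V m"
  proof
    fix v assume "v \<in> T"
    then have "fst v = i" "snd v \<in> Tl t x" unfolding T_def by auto
    then show "v \<in> G_V m" using Tl_range[of "snd v" t x] i unfolding G_V_def t_def
      by (cases v) (auto split: if_splits)
  qed
  have Tne: "T \<noteq> {}"
  proof -
    obtain b where "b \<in> Tl t x" using Tl_ne by blast
    then have "(i,b) \<in> T" unfolding T_def by simp
    then show ?thesis by blast
  qed
  have ST: "S \<inter> T = {}"
  proof (rule ccontr)
    assume "S \<inter> T \<noteq> {}"
    then obtain v where "v \<in> S" "v \<in> T" by blast
    then have "snd v = x" "snd v \<in> Tl t x" using hx unfolding T_def by auto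
    then show False using Tl_nx[of x t] by simp
  qed
  have im: "IM (G_E m) T"
  proof (cases t)
    case True
    then show ?thesis unfolding T_def using imm_H1[OF m] t_def by simp
  next
    case False
    then have "1 < i" "i < m" using i t_def by auto
    then show ?thesis unfolding T_def using imm_H2 False by simp
  qed
  obtain n where "(conv_step (G_V m) (G_E m) ^^ n) S = G_V m" using cs unfolding is_2conversion_set_def by blast
  then show False using immune_gen[OF TV Tne ST im] by blast
qed

lemma card_lb:
  assumes m: "2 \<le> m" and cs: "is_2conversion_set (G_V m) (G_E m) S"
  shows "2 * m \<le> card S"
proof -
  have SV: "S \<subseteq> G_V m" using cs unfolding is_2conversion_set_def by blast
  have finS: "finite S" using finite_subset[OF SV finite_GV] .
  let ?B = "\<lambda>i. {v \<in> S. fst v = i}"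
  have fB: "\<forall>i\<in>{1..m}. finite (?B i)" using finS by simp
  have dB: "\<forall>i\<in>{1..m}. \<forall>j\<in>{1..m}. i \<noteq> j \<longrightarrow> ?B i \<inter> ?B j = {}" by blast
  have e1: "card (\<Union>i\<in>{1..m}. ?B i) = (\<Sum>i\<in>{1..m}. card (?B i))"
    by (rule card_UN_disjoint[OF finite_atLeastAtMost fB dB])
  have e2: "(\<Sum>i\<in>{1..m}. (2::nat)) \<le> (\<Sum>i\<in>{1..m}. card (?B i))"
    by (rule sum_mono) (rule block_lb[OF m cs]; simp)
  have e3: "(\<Sum>i\<in>{1..m}. (2::nat)) = 2 * m" by simp
  have sub: "(\<Union>i\<in>{1..m}. ?B i) \<subseteq> S" by blast
  have e4: "card (\<Union>i\<in>{1..m}. ?B i) \<le> card S" by (rule card_mono[OF finS sub])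
  show ?thesis using e1 e2 e3 e4 by linarith
qed

lemma c2_eq: assumes m: "2 \<le> m" shows "c2 (G_V m) (G_E m) = 2 * m"
  unfolding c2_def
proof (rule Least_equality)
  show "\<exists>S. is_2conversion_set (G_V m) (G_E m) S \<and> card S = 2 * m"
    using upper[OF m] card_S0 by blast
next
  fix k assume "\<exists>S. is_2conversion_set (G_V m) (G_E m) S \<and> card S = k"
  then show "2 * m \<le> k" using card_lb[OF m] by blast
qed

lemma arith_final: assumes m: "2 \<le> m"
  shows "int (2*m) - \<lceil>(real (6*m-2) + 2) / 4\<rceil> = \<lfloor>real m / 2\<rfloor>"
proof -
  have r: "real (6*m-2) + 2 = 6 * real m" using m by (simp add: of_nat_diff)
  obtain k where k: "m = 2*k \<or> m = 2*k+1" by (metis odd_two_times_div_two_succ even_two_times_div_two)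
  then show ?thesis
  proof
    assume mk: "m = 2*k"
    have "(6 * real m) / 4 = of_int (3 * int k)" using mk by simp
    moreover have "real m / 2 = of_int (int k)" using mk by simp
    ultimately show ?thesis using r mk by (simp only: ceiling_of_int floor_of_int)
  next
    assume mk: "m = 2*k+1"
    have "\<lceil>(6 * real m) / 4\<rceil> = 3 * int k + 2"
      using mk by (simp add: ceiling_eq_iff)
    moreover have "\<lfloor>real m / 2\<rfloor> = int k"
      using mk by (simp add: floor_eq_iff)
    ultimately show ?thesis using r mk by simp
  qed
qed


theorem proposition5p6:
  fixes m :: nat
  assumes "m \<ge> 2"
  shows "cubic (G_V m) (G_E m) \<and> bridged (G_V m) (G_E m) \<and> class2 (G_V m) (G_E m)
         \<and> has_triangle (G_E m)
         \<and> int (c2 (G_V m) (G_E m)) - \<lceil>(real (card (G_V m)) + 2) / 4\<rceil> = \<lfloor>real m / 2\<rfloor>"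
proof -
  have m: "2 \<le> m" using assms by simp
  have "int (c2 (G_V m) (G_E m)) - \<lceil>(real (card (G_V m)) + 2) / 4\<rceil>
        = int (2*m) - \<lceil>(real (6*m-2) + 2) / 4\<rceil>"
    by (simp only: c2_eq[OF m] card_GV[OF m])
  also have "\<dots> = \<lfloor>real m / 2\<rfloor>" by (rule arith_final[OF m])
  finally show ?thesis using cubic[OF m] bridged[OF m] class2[OF m] triangle[OF m] by blast
qed

end
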